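(* Let $L$ be an $n$-modal logic. If $L$ is $1$-tabular, then $L$ is pretransitive and of finite height, i.e. there are $m,h<\omega$ with $L\vdash \Diamond^{m+1}p\to\Diamond^{\le m}p$ and $L\vdash B_h$.
   Context: Fix $n\ge 1$. $n$-modal formulas are built from variables $p_0,p_1,\dots$ with $\to,\bot$ and unary modalities $\Diamond_i$ ($i<n$); $\Box_i=\neg\Diamond_i\neg$. A logic is a set of $n$-modal formulas containing all classical tautologies, $\Diamond_i(p\vee q)\to\Diamond_ip\vee\Diamond_iq$ and $\neg\Diamond_i\bot$ for all $i<n$, closed under modus ponens, uniform substitution and monotonicity (if $\varphi\to\psi\in L$ then $\Diamond_i\varphi\to\Diamond_i\psi\in L$). A $k$-formula is a formula in the variables $p_j$, $j<k$. $L$ is $k$-tabular if there are only finitely many $k$-formulas up to $L$-provable equivalence. Put $\Diamond^0\varphi=\varphi$, $\Diamond^{i+1}\varphi=\Diamond^i(\Diamond_0\varphi\vee\dots\vee\Diamond_{n-1}\varphi)$, $\Diamond^{\le m}\varphi=\bigvee_{i\le m}\Diamond^i\varphi$, $\Box^{\le m}\varphi=\neg\Diamond^{\le m}\neg\varphi$. $L$ is $m$-transitive if $L\vdash\Diamond^{m+1}p\to\Diamond^{\le m}p$, pretransitive if $m$-transitive for some $m$; then, for the least such $m$, $\Diamond^*:=\Diamond^{\le m}$, $\Box^*:=\Box^{\le m}$. Define $B_0=\bot$, $B_{i+1}=p_{i+1}\to\Box^*(\Diamond^*p_{i+1}\vee B_i)$. A pretransitive logic is of finite height if it contains $B_h$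 for some $h<\omega$. *)

theory Defs
  imports Main
begin

datatype fm = Var nat | Bot | Imp fm fm | Dia nat fm

fun nfm :: "nat \<Rightarrow> fm \<Rightarrow> bool" where
  "nfm n (Var p) = True"
| "nfm n Bot = True"
| "nfm n (Imp a b) = (nfm n a \<and> nfm n b)"
| "nfm n (Dia i a) = (i < n \<and> nfm n a)"

fun vars :: "fm \<Rightarrow> nat set" where
  "vars (Var p) = {p}"
| "vars Bot = {}"
| "vars (Imp a b) = vars a \<union> vars b"
| "vars (Dia i a) = vars a"

definition kfm :: "nat \<Rightarrow> nat \<Rightarrow> fm \<Rightarrow> bool" where
  "kfm n k a \<longleftrightarrow> nfm n a \<and> vars a \<subseteq> {..<k}"

definition Neg :: "fm \<Rightarrow> fm" where "Neg a = Imp a Bot"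
definition Or :: "fm \<Rightarrow> fm \<Rightarrow> fm" where "Or a b = Imp (Neg a) b"
definition And :: "fm \<Rightarrow> fm \<Rightarrow> fm" where "And a b = Neg (Imp a (Neg b))"
definition Iff :: "fm \<Rightarrow> fm \<Rightarrow> fm" where "Iff a b = And (Imp a b) (Imp b a)"
definition Box :: "nat \<Rightarrow> fm \<Rightarrow> fm" where "Box i a = Neg (Dia i (Neg a))"

fun Disjs :: "fm list \<Rightarrow> fm" where
  "Disjs [] = Bot"
| "Disjs (a # as) = Or a (Disjs as)"

text \<open>Propositional evaluation, treating variables and modal subformulas as atoms.\<close>
fun peval :: "(fm \<Rightarrow> bool) \<Rightarrow> fm \<Rightarrow> bool" where
  "peval v (Var p) = v (Var p)"
| "peval v Bot = False"
| "peval v (Imp a b) = (peval v a \<longrightarrow> peval v b)"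
| "peval v (Dia i a) = v (Dia i a)"

definition tautology :: "fm \<Rightarrow> bool" where
  "tautology a \<longleftrightarrow> (\<forall>v. peval v a)"

fun subst :: "(nat \<Rightarrow> fm) \<Rightarrow> fm \<Rightarrow> fm" where
  "subst s (Var p) = s p"
| "subst s Bot = Bot"
| "subst s (Imp a b) = Imp (subst s a) (subst s b)"
| "subst s (Dia i a) = Dia i (subst s a)"

definition logic :: "nat \<Rightarrow> fm set \<Rightarrow> bool" where
  "logic n L \<longleftrightarrow>
     (\<forall>a\<in>L. nfm n a) \<and>
     (\<forall>a. nfm n a \<and> tautology a \<longrightarrow> a \<in> L) \<and>
     (\<forall>i<n. Imp (Dia i (Or (Var 0) (Var 1))) (Or (Dia i (Var 0)) (Dia i (Var 1))) \<in> L) \<and>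
     (\<forall>i<n. Neg (Dia i Bot) \<in> L) \<and>
     (\<forall>a b. a \<in> L \<longrightarrow> Imp a b \<in> L \<longrightarrow> b \<in> L) \<and>
     (\<forall>s a. (\<forall>p. nfm n (s p)) \<longrightarrow> a \<in> L \<longrightarrow> subst s a \<in> L) \<and>
     (\<forall>i<n. \<forall>a b. Imp a b \<in> L \<longrightarrow> Imp (Dia i a) (Dia i b) \<in> L)"

text \<open>k-tabularity: finitely many k-formulas up to L-provable equivalence.\<close>
definition tabular :: "nat \<Rightarrow> fm set \<Rightarrow> nat \<Rightarrow> bool" where
  "tabular n L k \<longleftrightarrow>
     finite ((\<lambda>a. {b. kfm n k b \<and> Iff a b \<in> L}) ` {a. kfm n k a})"

definition DiaAny :: "nat \<Rightarrow> fm \<Rightarrow> fm" where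
  "DiaAny n a = Disjs (map (\<lambda>j. Dia j a) [0..<n])"

fun DiaPow :: "nat \<Rightarrow> nat \<Rightarrow> fm \<Rightarrow> fm" where
  "DiaPow n 0 a = a"
| "DiaPow n (Suc i) a = DiaPow n i (DiaAny n a)"

definition DiaLe :: "nat \<Rightarrow> nat \<Rightarrow> fm \<Rightarrow> fm" where
  "DiaLe n m a = Disjs (map (\<lambda>i. DiaPow n i a) [0..<Suc m])"

definition BoxLe :: "nat \<Rightarrow> nat \<Rightarrow> fm \<Rightarrow> fm" where
  "BoxLe n m a = Neg (DiaLe n m (Neg a))"

definition m_transitive :: "nat \<Rightarrow> fm set \<Rightarrow> nat \<Rightarrow> bool" where
  "m_transitive n L m \<longleftrightarrow> Imp (DiaPow n (Suc m) (Var 0)) (DiaLe n m (Var 0)) \<in> L"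

definition pretransitive :: "nat \<Rightarrow> fm set \<Rightarrow> bool" where
  "pretransitive n L \<longleftrightarrow> (\<exists>m. m_transitive n L m)"

definition trans_index :: "nat \<Rightarrow> fm set \<Rightarrow> nat" where
  "trans_index n L = (LEAST m. m_transitive n L m)"

definition DiaStar :: "nat \<Rightarrow> fm set \<Rightarrow> fm \<Rightarrow> fm" where
  "DiaStar n L a = DiaLe n (trans_index n L) a"

definition BoxStar :: "nat \<Rightarrow> fm set \<Rightarrow> fm \<Rightarrow> fm" where
  "BoxStar n L a = BoxLe n (trans_index n L) a"

fun Bh :: "nat \<Rightarrow> fm set \<Rightarrow> nat \<Rightarrow> fm" where
  "Bh n L 0 = Bot"
| "Bh n L (Suc i) = Imp (Var (Suc i)) (BoxStar n L (Or (DiaStar n L (Var (Suc i))) (Bh n L i)))"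

definition finite_height :: "nat \<Rightarrow> fm set \<Rightarrow> bool" where
  "finite_height n L \<longleftrightarrow> pretransitive n L \<and> (\<exists>h. Bh n L h \<in> L)"

end

theory Submission
  imports Defs
begin

fun imps :: "fm list \<Rightarrow> fm \<Rightarrow> fm" where
  "imps [] b = b" | "imps (a#as) b = Imp a (imps as b)"

lemma peval_imps[simp]: "peval v (imps As b) = ((\<forall>a\<in>set As. peval v a) \<longrightarrow> peval v b)"
  by (induct As) auto

lemma peval_Disjs[simp]: "peval v (Disjs xs) = (\<exists>x\<in>set xs. peval v x)"
  by (induct xs) (auto simp: Or_def Neg_def)

lemma peval_conn[simp]:
  "peval v (Neg a) = (\<not> peval v a)"
  "peval v (Or a b) = (peval v a \<or> peval v b)"
  "peval v (And a b) = (peval v a \<and> peval v b)"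
  "peval v (Iff a b) = (peval v a \<longleftrightarrow> peval v b)"
  by (auto simp: Neg_def Or_def And_def Iff_def)

lemma nfm_conn[simp]:
  "nfm n (Neg a) = nfm n a"
  "nfm n (Or a b) = (nfm n a \<and> nfm n b)"
  "nfm n (And a b) = (nfm n a \<and> nfm n b)"
  "nfm n (Iff a b) = (nfm n a \<and> nfm n b)"
  by (auto simp: Neg_def Or_def And_def Iff_def)

lemma nfm_Disjs[simp]: "nfm n (Disjs xs) = (\<forall>x\<in>set xs. nfm n x)"
  by (induct xs) (auto simp: Or_def Neg_def)
lemma nfm_imps[simp]: "nfm n (imps As b) = ((\<forall>a\<in>set As. nfm n a) \<and> nfm n b)"
  by (induct As) auto

lemma subst_conn[simp]:
  "subst s (Neg a) = Neg (subst s a)"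
  "subst s (Or a b) = Or (subst s a) (subst s b)"
  "subst s (And a b) = And (subst s a) (subst s b)"
  "subst s (Iff a b) = Iff (subst s a) (subst s b)"
  by (auto simp: Neg_def Or_def And_def Iff_def)

lemma subst_Disjs[simp]: "subst s (Disjs xs) = Disjs (map (subst s) xs)"
  by (induct xs) (auto simp: Or_def Neg_def)

lemma DiaPow_funpow: "DiaPow n k a = (DiaAny n ^^ k) a"
  by (induct k arbitrary: a) (auto simp: funpow_swap1)

lemma DiaPow_comp: "DiaPow n i (DiaPow n j a) = DiaPow n (i+j) a"
  by (simp add: DiaPow_funpow funpow_add)

lemma subst_DiaAny[simp]: "subst s (DiaAny n a) = DiaAny n (subst s a)"
  by (simp add: DiaAny_def comp_def)
lemma subst_DiaPow[simp]: "subst s (DiaPow n k a) = DiaPow n k (subst s a)"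
  by (induct k arbitrary: a) auto
lemma subst_DiaLe[simp]: "subst s (DiaLe n k a) = DiaLe n k (subst s a)"
  by (simp add: DiaLe_def comp_def)

lemma vars_DiaAny: "vars (DiaAny n a) \<subseteq> vars a"
proof -
  have "\<And>xs. (\<forall>x\<in>set xs. vars x \<subseteq> vars a) \<Longrightarrow> vars (Disjs xs) \<subseteq> vars a"
  proof -
    fix xs show "(\<forall>x\<in>set xs. vars x \<subseteq> vars a) \<Longrightarrow> vars (Disjs xs) \<subseteq> vars a"
      by (induct xs) (auto simp: Or_def Neg_def)
  qed
  thus ?thesis by (auto simp: DiaAny_def)
qed

lemma vars_Disjs: "(\<forall>x\<in>set xs. vars x \<subseteq> A) \<Longrightarrow> vars (Disjs xs) \<subseteq> A"
  by (induct xs) (auto simp: Or_def Neg_def)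

lemma vars_DiaPow: "vars (DiaPow n k a) \<subseteq> vars a"
  by (induct k arbitrary: a) (auto, meson subsetD vars_DiaAny)

lemma vars_DiaLe: "vars (DiaLe n k a) \<subseteq> vars a"
  unfolding DiaLe_def by (rule vars_Disjs) (auto intro: vars_DiaPow[THEN subsetD])

lemma vars_conn[simp]:
  "vars (Neg a) = vars a"
  "vars (Or a b) = vars a \<union> vars b"
  "vars (And a b) = vars a \<union> vars b"
  "vars (Iff a b) = vars a \<union> vars b"
  by (auto simp: Neg_def Or_def And_def Iff_def)

locale MLg =
  fixes n :: nat and L :: "fm set"
  assumes lg: "logic n L"
begin

lemma L_nfm: "a \<in> L \<Longrightarrow> nfm n a"
  using lg unfolding logic_def by blast

lemma taut_in: "nfm n a \<Longrightarrow> (\<And>v. peval v a) \<Longrightarrow> a \<in> L"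
  using lg unfolding logic_def tautology_def by blast

lemma mp: "a \<in> L \<Longrightarrow> Imp a b \<in> L \<Longrightarrow> b \<in> L"
  using lg unfolding logic_def by blast

lemma sub: "(\<And>p. nfm n (s p)) \<Longrightarrow> a \<in> L \<Longrightarrow> subst s a \<in> L"
  using lg unfolding logic_def by blast

lemma monoDia: "i < n \<Longrightarrow> Imp a b \<in> L \<Longrightarrow> Imp (Dia i a) (Dia i b) \<in> L"
  using lg unfolding logic_def by blast

lemma botDia: "i < n \<Longrightarrow> Neg (Dia i Bot) \<in> L"
  using lg unfolding logic_def by blast

lemma distDia:
  assumes "i < n" "nfm n a" "nfm n b"
  shows "Imp (Dia i (Or a b)) (Or (Dia i a) (Dia i b)) \<in> L"
proof -
  define s where "s = (\<lambda>p::nat. if p = 0 then a else if p = 1 then b else Bot)"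
  have "Imp (Dia i (Or (Var 0) (Var 1))) (Or (Dia i (Var 0)) (Dia i (Var 1))) \<in> L"
    using lg assms unfolding logic_def by blast
  from sub[OF _ this, of s] assms show ?thesis by (auto simp: s_def)
qed

lemma imps_mp: "imps As b \<in> L \<Longrightarrow> set As \<subseteq> L \<Longrightarrow> b \<in> L"
  by (induct As) (auto intro: mp)

lemma taut_mp:
  assumes "set As \<subseteq> L" "nfm n b" "\<And>v. (\<forall>a\<in>set As. peval v a) \<Longrightarrow> peval v b"
  shows "b \<in> L"
proof -
  have "imps As b \<in> L" using assms by (intro taut_in) (auto dest: L_nfm)
  thus ?thesis using assms imps_mp by blast
qed

lemma imp_trans: "Imp a b \<in> L \<Longrightarrow> Imp b c \<in> L \<Longrightarrow> Imp a c \<in> L"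
  by (rule taut_mp[of "[Imp a b, Imp b c]"]) (auto dest: L_nfm)

definition nop :: "(fm \<Rightarrow> fm) \<Rightarrow> bool" where
  "nop f \<longleftrightarrow> (\<forall>a. nfm n a \<longrightarrow> nfm n (f a)) \<and> (\<forall>a b. Imp a b \<in> L \<longrightarrow> Imp (f a) (f b) \<in> L) \<and>
    (\<forall>a b. nfm n a \<longrightarrow> nfm n b \<longrightarrow> Imp (f (Or a b)) (Or (f a) (f b)) \<in> L) \<and> Neg (f Bot) \<in> L"

lemma nop_id: "nop (\<lambda>a. a)"
  unfolding nop_def by (auto intro!: taut_in)

lemma nop_Dia: "i < n \<Longrightarrow> nop (Dia i)"
  unfolding nop_def using monoDia botDia distDia by (auto dest: L_nfm)

lemma nop_comp:
  assumes f: "nop f" and g: "nop g" shows "nop (\<lambda>a. f (g a))"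
proof -
  have "Imp (f (g (Or a b))) (Or (f (g a)) (f (g b))) \<in> L" if "nfm n a" "nfm n b" for a b
    using f g that unfolding nop_def by (meson imp_trans nfm_conn(2))
  moreover have "Neg (f (g Bot)) \<in> L"
    using f g unfolding nop_def Neg_def by (meson imp_trans)
  ultimately show ?thesis using f g unfolding nop_def by auto
qed

lemma nop_Disjs:
  assumes "\<forall>f\<in>set fs. nop f" shows "nop (\<lambda>a. Disjs (map (\<lambda>f. f a) fs))"
  unfolding nop_def
proof (intro conjI allI impI)
  show "nfm n (Disjs (map (\<lambda>f. f a) fs))" if "nfm n a" for a
    using assms that by (auto simp: nop_def)
  show "Imp (Disjs (map (\<lambda>f. f a) fs)) (Disjs (map (\<lambda>f. f b) fs)) \<in> L" if "Imp a b \<in> L" for a b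
  proof (rule taut_mp[of "map (\<lambda>f. Imp (f a) (f b)) fs"])
    show "set (map (\<lambda>f. Imp (f a) (f b)) fs) \<subseteq> L" using assms that by (auto simp: nop_def)
    show "nfm n (Imp (Disjs (map (\<lambda>f. f a) fs)) (Disjs (map (\<lambda>f. f b) fs)))"
      using assms L_nfm[OF that] by (auto simp: nop_def)
  qed auto
  show "Imp (Disjs (map (\<lambda>f. f (Or a b)) fs)) (Or (Disjs (map (\<lambda>f. f a) fs)) (Disjs (map (\<lambda>f. f b) fs))) \<in> L"
    if "nfm n a" "nfm n b" for a b
  proof (rule taut_mp[of "map (\<lambda>f. Imp (f (Or a b)) (Or (f a) (f b))) fs"])
    show "set (map (\<lambda>f. Imp (f (Or a b)) (Or (f a) (f b))) fs) \<subseteq> L" using assms that by (auto simp: nop_def)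
    show "nfm n (Imp (Disjs (map (\<lambda>f. f (Or a b)) fs)) (Or (Disjs (map (\<lambda>f. f a) fs)) (Disjs (map (\<lambda>f. f b) fs))))"
      using assms that by (auto simp: nop_def)
  qed fastforce
  show "Neg (Disjs (map (\<lambda>f. f Bot) fs)) \<in> L"
  proof (rule taut_mp[of "map (\<lambda>f. Neg (f Bot)) fs"])
    show "set (map (\<lambda>f. Neg (f Bot)) fs) \<subseteq> L" using assms by (auto simp: nop_def)
    show "nfm n (Neg (Disjs (map (\<lambda>f. f Bot) fs)))" using assms by (auto simp: nop_def)
  qed auto
qed

lemma nop_DiaAny: "nop (DiaAny n)"
proof -
  have "nop (\<lambda>a. Disjs (map (\<lambda>f. f a) (map Dia [0..<n])))"
    by (rule nop_Disjs) (auto intro: nop_Dia)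
  moreover have "DiaAny n = (\<lambda>a. Disjs (map (\<lambda>x. Dia x a) [0..<n]))" by (rule ext) (simp add: DiaAny_def)
  ultimately show ?thesis by (simp add: comp_def)
qed

lemma nop_DiaPow: "nop (DiaPow n k)"
proof (induct k)
  case 0 then show ?case using nop_id by (simp add: DiaPow_funpow)
next
  case (Suc k)
  have "DiaPow n (Suc k) = (\<lambda>a. DiaPow n k (DiaAny n a))" by auto
  then show ?case using nop_comp[OF Suc nop_DiaAny] by simp
qed

lemma nop_DiaLe: "nop (DiaLe n k)"
proof -
  have "nop (\<lambda>a. Disjs (map (\<lambda>f. f a) (map (DiaPow n) [0..<Suc k])))"
    by (rule nop_Disjs) (auto intro: nop_DiaPow)
  thus ?thesis by (simp add: DiaLe_def[abs_def] comp_def)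
qed

lemma nop_Disjs_dist:
  assumes "nop f" "\<forall>x\<in>set xs. nfm n x"
  shows "Imp (f (Disjs xs)) (Disjs (map f xs)) \<in> L"
  using assms(2)
proof (induct xs)
  case Nil then show ?case using assms(1) by (simp add: nop_def Neg_def)
next
  case (Cons x xs)
  have 1: "Imp (f (Or x (Disjs xs))) (Or (f x) (f (Disjs xs))) \<in> L"
    using assms(1) Cons by (auto simp: nop_def)
  have 2: "Imp (f (Disjs xs)) (Disjs (map f xs)) \<in> L" using Cons by auto
  show ?case
  proof (rule taut_mp[of "[Imp (f (Or x (Disjs xs))) (Or (f x) (f (Disjs xs))), Imp (f (Disjs xs)) (Disjs (map f xs))]"])
    show "nfm n (Imp (f (Disjs (x # xs))) (Disjs (map f (x # xs))))"
      using L_nfm[OF 1] L_nfm[OF 2] by simp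
  qed (use 1 2 in auto)
qed

end


context MLg
begin

definition cl :: "fm \<Rightarrow> fm set" where
  "cl a = {b. kfm n 1 b \<and> Iff a b \<in> L}"

lemma cl_eq: "cl a = cl b \<Longrightarrow> kfm n 1 b \<Longrightarrow> Iff a b \<in> L"
proof -
  assume e: "cl a = cl b" and k: "kfm n 1 b"
  have "Iff b b \<in> L" using k by (intro taut_in) (auto simp: kfm_def)
  hence "b \<in> cl b" using k by (simp add: cl_def)
  hence "b \<in> cl a" using e by simp
  thus ?thesis by (simp add: cl_def)
qed

lemma tab_noninj:
  fixes f :: "nat \<Rightarrow> fm" and A :: "nat set"
  assumes tab: "tabular n L 1" and k: "\<And>i. kfm n 1 (f i)" and inf: "infinite A"
  shows "\<exists>i\<in>A. \<exists>j\<in>A. i < j \<and> Iff (f i) (f j) \<in> L"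
proof -
  have "(\<lambda>i. cl (f i)) ` A \<subseteq> cl ` {a. kfm n 1 a}" using k by auto
  moreover have "finite (cl ` {a. kfm n 1 a})" using tab by (simp add: tabular_def cl_def)
  ultimately have "finite ((\<lambda>i. cl (f i)) ` A)" by (rule finite_subset)
  hence "\<not> inj_on (\<lambda>i. cl (f i)) A" using inf finite_imageD by blast
  then obtain i j where ij: "i \<in> A" "j \<in> A" "i \<noteq> j" "cl (f i) = cl (f j)"
    by (auto simp: inj_on_def)
  show ?thesis
  proof (cases "i < j")
    case True then show ?thesis using ij cl_eq k by blast
  next
    case False then have "j < i" using ij by simp
    then show ?thesis using ij cl_eq[of "f j" "f i"] k by metis
  qed
qed

lemma pretrans:
  assumes tab: "tabular n L 1"
  shows "pretransitive n L"
proof -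
  have k: "kfm n 1 (DiaLe n i (Var 0))" for i
    using nop_DiaLe[of i] vars_DiaLe[of n i "Var 0"] by (auto simp: kfm_def nop_def)
  obtain i j where ij: "i < j" "Iff (DiaLe n i (Var 0)) (DiaLe n j (Var 0)) \<in> L"
    using tab_noninj[OF tab k, of UNIV] by blast
  have "Imp (DiaPow n (Suc i) (Var 0)) (DiaLe n i (Var 0)) \<in> L"
  proof (rule taut_mp[of "[Iff (DiaLe n i (Var 0)) (DiaLe n j (Var 0))]"])
    show "nfm n (Imp (DiaPow n (Suc i) (Var 0)) (DiaLe n i (Var 0)))"
      using k nop_DiaPow[of "Suc i"] by (auto simp: kfm_def nop_def)
    fix v assume "\<forall>a\<in>set [Iff (DiaLe n i (Var 0)) (DiaLe n j (Var 0))]. peval v a"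
    moreover have "DiaPow n (Suc i) (Var 0) \<in> set (map (\<lambda>k. DiaPow n k (Var 0)) [0..<Suc j])"
      unfolding set_map using ij by (intro imageI) auto
    ultimately show "peval v (Imp (DiaPow n (Suc i) (Var 0)) (DiaLe n i (Var 0)))"
      by (auto simp: DiaLe_def simp del: upt_Suc)
  qed (use ij in auto)
  thus ?thesis by (auto simp: pretransitive_def m_transitive_def)
qed

end


context MLg
begin

lemma disjs_imp:
  assumes "\<forall>x\<in>set xs. Imp x c \<in> L" "nfm n c"
  shows "Imp (Disjs xs) c \<in> L"
proof (rule taut_mp[of "map (\<lambda>x. Imp x c) xs"])
  have "\<forall>x\<in>set xs. nfm n x" using assms L_nfm by fastforce
  then show "nfm n (Imp (Disjs xs) c)" using assms by auto
qed (use assms in auto)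

definition cons :: "fm set \<Rightarrow> bool" where
  "cons S \<longleftrightarrow> \<not> (\<exists>As. set As \<subseteq> S \<and> imps As Bot \<in> L)"

definition mcs :: "fm set \<Rightarrow> bool" where
  "mcs S \<longleftrightarrow> (\<forall>a\<in>S. nfm n a) \<and> cons S \<and> (\<forall>a. nfm n a \<longrightarrow> a \<in> S \<or> Neg a \<in> S)"

lemma mcs_deriv:
  assumes S: "mcs S" and As: "set As \<subseteq> S" and b: "nfm n b" and d: "imps As b \<in> L"
  shows "b \<in> S"
proof (rule ccontr)
  assume "b \<notin> S"
  hence nb: "Neg b \<in> S" using S b by (auto simp: mcs_def)
  have "imps (As @ [Neg b]) Bot \<in> L"
    by (rule taut_mp[of "[imps As b]"]) (use d in \<open>auto dest: L_nfm\<close>)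
  moreover have "set (As @ [Neg b]) \<subseteq> S" using As nb by auto
  ultimately show False using S by (auto simp: mcs_def cons_def)
qed

lemma mcs_taut:
  assumes S: "mcs S" and As: "set As \<subseteq> S" and b: "nfm n b"
    and t: "\<And>v. (\<forall>a\<in>set As. peval v a) \<Longrightarrow> peval v b"
  shows "b \<in> S"
proof -
  have "imps As b \<in> L" using S As b t by (intro taut_in) (auto simp: mcs_def)
  thus ?thesis using mcs_deriv[OF S As b] by blast
qed

lemma mcs_L: "mcs S \<Longrightarrow> a \<in> L \<Longrightarrow> a \<in> S"
  using mcs_deriv[of S "[]" a] L_nfm by auto

lemma mcs_Bot: "mcs S \<Longrightarrow> Bot \<notin> S"
proof
  assume "mcs S" "Bot \<in> S"
  moreover have "imps [Bot] Bot \<in> L" by (rule taut_in) auto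
  ultimately show False by (auto simp: mcs_def cons_def simp del: imps.simps)
qed

lemma mcs_Imp:
  assumes S: "mcs S" and a: "nfm n a" and b: "nfm n b"
  shows "Imp a b \<in> S \<longleftrightarrow> (a \<in> S \<longrightarrow> b \<in> S)"
proof
  assume "Imp a b \<in> S"
  thus "a \<in> S \<longrightarrow> b \<in> S" using mcs_taut[OF S, of "[a, Imp a b]" b] b by auto
next
  assume h: "a \<in> S \<longrightarrow> b \<in> S"
  show "Imp a b \<in> S"
  proof (cases "a \<in> S")
    case True
    thus ?thesis using h mcs_taut[OF S, of "[b]" "Imp a b"] a b by auto
  next
    case False
    hence "Neg a \<in> S" using S a by (auto simp: mcs_def)
    thus ?thesis using mcs_taut[OF S, of "[Neg a]" "Imp a b"] a b by auto
  qed
qed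

lemma mcs_Neg: "mcs S \<Longrightarrow> nfm n a \<Longrightarrow> Neg a \<in> S \<longleftrightarrow> a \<notin> S"
  unfolding Neg_def using mcs_Imp[of S a Bot] mcs_Bot by auto

lemma mcs_Or: "mcs S \<Longrightarrow> nfm n a \<Longrightarrow> nfm n b \<Longrightarrow> Or a b \<in> S \<longleftrightarrow> (a \<in> S \<or> b \<in> S)"
  unfolding Or_def using mcs_Imp[of S "Neg a" b] mcs_Neg[of S a] by auto

lemma mcs_And: "mcs S \<Longrightarrow> nfm n a \<Longrightarrow> nfm n b \<Longrightarrow> And a b \<in> S \<longleftrightarrow> (a \<in> S \<and> b \<in> S)"
  unfolding And_def using mcs_Imp[of S a "Neg b"] mcs_Neg[of S b] mcs_Neg[of S "Imp a (Neg b)"] by auto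

lemma mcs_Iff: "mcs S \<Longrightarrow> nfm n a \<Longrightarrow> nfm n b \<Longrightarrow> Iff a b \<in> S \<longleftrightarrow> (a \<in> S \<longleftrightarrow> b \<in> S)"
  unfolding Iff_def using mcs_And[of S "Imp a b" "Imp b a"] mcs_Imp[of S a b] mcs_Imp[of S b a] by auto

lemma mcs_MP: "mcs S \<Longrightarrow> Imp a b \<in> L \<Longrightarrow> a \<in> S \<Longrightarrow> b \<in> S"
  using mcs_L[of S "Imp a b"] mcs_Imp[of S a b] L_nfm[of "Imp a b"] by auto

lemma lindenbaum:
  assumes c: "cons S" and nf: "\<forall>a\<in>S. nfm n a"
  shows "\<exists>M. S \<subseteq> M \<and> mcs M"
proof -
  define A where "A = {T. S \<subseteq> T \<and> (\<forall>a\<in>T. nfm n a) \<and> cons T}"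
  have "\<exists>M\<in>A. \<forall>X\<in>A. M \<subseteq> X \<longrightarrow> X = M"
  proof (rule subset_Zorn_nonempty)
    show "A \<noteq> {}" using c nf by (auto simp: A_def)
    fix C assume ne: "C \<noteq> {}" and ch: "subset.chain A C"
    have CA: "C \<subseteq> A" using ch by (auto simp: subset_chain_def)
    have "cons (\<Union>C)"
      unfolding cons_def
    proof
      assume "\<exists>As. set As \<subseteq> \<Union>C \<and> imps As Bot \<in> L"
      then obtain As where As: "set As \<subseteq> \<Union>C" "imps As Bot \<in> L" by blast
      obtain B where "B \<in> C" "set As \<subseteq> B"
        using finite_subset_Union_chain[OF _ As(1) ne ch] by blast
      thus False using CA As(2) by (auto simp: A_def cons_def)
    qed
    thus "\<Union>C \<in> A" using ne CA by (auto simp: A_def)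
  qed
  then obtain M where M: "M \<in> A" "\<And>X. X \<in> A \<Longrightarrow> M \<subseteq> X \<Longrightarrow> X = M" by blast
  have "mcs M"
    unfolding mcs_def
  proof (intro conjI allI impI)
    show "\<forall>a\<in>M. nfm n a" "cons M" using M by (auto simp: A_def)
    fix a assume a: "nfm n a"
    show "a \<in> M \<or> Neg a \<in> M"
    proof (rule ccontr)
      assume h: "\<not> (a \<in> M \<or> Neg a \<in> M)"
      have "\<not> cons (insert a M)"
      proof
        assume "cons (insert a M)"
        hence "insert a M \<in> A" using M a by (auto simp: A_def)
        hence "insert a M = M" using M by blast
        thus False using h by auto
      qed
      then obtain As where As: "set As \<subseteq> insert a M" "imps As Bot \<in> L" by (auto simp: cons_def)
      have "\<not> cons (insert (Neg a) M)"
      proof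
        assume "cons (insert (Neg a) M)"
        hence "insert (Neg a) M \<in> A" using M a by (auto simp: A_def)
        hence "insert (Neg a) M = M" using M by blast
        thus False using h by auto
      qed
      then obtain Bs where Bs: "set Bs \<subseteq> insert (Neg a) M" "imps Bs Bot \<in> L" by (auto simp: cons_def)
      have "imps (filter (\<lambda>x. x \<noteq> a) As @ filter (\<lambda>x. x \<noteq> Neg a) Bs) Bot \<in> L"
      proof (rule taut_mp[of "[imps As Bot, imps Bs Bot]"])
        show "nfm n (imps (filter (\<lambda>x. x \<noteq> a) As @ filter (\<lambda>x. x \<noteq> Neg a) Bs) Bot)"
          using L_nfm[OF As(2)] L_nfm[OF Bs(2)] by auto
        fix v assume "\<forall>x\<in>set [imps As Bot, imps Bs Bot]. peval v x"
        hence 1: "\<not> (\<forall>x\<in>set As. peval v x)" "\<not> (\<forall>x\<in>set Bs. peval v x)" by auto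
        show "peval v (imps (filter (\<lambda>x. x \<noteq> a) As @ filter (\<lambda>x. x \<noteq> Neg a) Bs) Bot)"
        proof (cases "peval v a")
          case True thus ?thesis using 1(1) by auto
        next
          case False
          obtain x where x: "x \<in> set Bs" "\<not> peval v x" using 1(2) by blast
          moreover have "x \<noteq> Neg a" using x False by auto
          ultimately show ?thesis by auto
        qed
      qed (use As Bs in auto)
      moreover have "set (filter (\<lambda>x. x \<noteq> a) As @ filter (\<lambda>x. x \<noteq> Neg a) Bs) \<subseteq> M"
        using As Bs by auto
      ultimately show False using M by (auto simp: A_def cons_def)
    qed
  qed
  thus ?thesis using M by (auto simp: A_def)
qed

end


locale PT = MLg +
  fixes m :: nat
  assumes mt: "m_transitive n L m"
begin

abbreviation D :: "fm \<Rightarrow> fm" where "D \<equiv> DiaLe n m"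
abbreviation bx :: "fm \<Rightarrow> fm" where "bx a \<equiv> Neg (D (Neg a))"

lemma D_nfm: "nfm n a \<Longrightarrow> nfm n (D a)"
  using nop_DiaLe by (auto simp: nop_def)
lemma D_mono: "Imp a b \<in> L \<Longrightarrow> Imp (D a) (D b) \<in> L"
  using nop_DiaLe by (auto simp: nop_def)
lemma D_dist: "nfm n a \<Longrightarrow> nfm n b \<Longrightarrow> Imp (D (Or a b)) (Or (D a) (D b)) \<in> L"
  using nop_DiaLe by (auto simp: nop_def)
lemma D_bot: "Neg (D Bot) \<in> L"
  using nop_DiaLe by (auto simp: nop_def)

lemma DiaPow_nfm: "nfm n a \<Longrightarrow> nfm n (DiaPow n k a)"
  using nop_DiaPow by (auto simp: nop_def)

lemma pow_in_D: "k \<le> m \<Longrightarrow> nfm n a \<Longrightarrow> Imp (DiaPow n k a) (D a) \<in> L"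
proof (rule taut_mp[of "[]"])
  assume k: "k \<le> m" and a: "nfm n a"
  show "nfm n (Imp (DiaPow n k a) (D a))" using a DiaPow_nfm D_nfm by auto
  fix v
  have "DiaPow n k a \<in> set (map (\<lambda>i. DiaPow n i a) [0..<Suc m])"
    unfolding set_map using k by (intro imageI) auto
  thus "peval v (Imp (DiaPow n k a) (D a))" by (auto simp: DiaLe_def simp del: upt_Suc)
qed auto

lemma D_refl: "nfm n a \<Longrightarrow> Imp a (D a) \<in> L"
  using pow_in_D[of 0 a] by simp

lemma mt_inst: "nfm n a \<Longrightarrow> Imp (DiaPow n (Suc m) a) (D a) \<in> L"
  using sub[of "\<lambda>_. a" "Imp (DiaPow n (Suc m) (Var 0)) (DiaLe n m (Var 0))"] mt
  by (auto simp: m_transitive_def simp del: DiaPow.simps)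

lemma pow_D: "nfm n a \<Longrightarrow> Imp (DiaPow n k a) (D a) \<in> L"
proof (induct k rule: less_induct)
  case (less k)
  show ?case
  proof (cases "k \<le> m")
    case True thus ?thesis using pow_in_D less by auto
  next
    case False
    define r where "r = k - Suc m"
    have k: "k = Suc m + r" using False r_def by auto
    have ra: "nfm n (DiaPow n r a)" using less DiaPow_nfm by auto
    have 1: "Imp (DiaPow n k a) (D (DiaPow n r a)) \<in> L"
      using mt_inst[OF ra] by (simp add: DiaPow_comp k del: DiaPow.simps)
    have 2: "Imp (D (DiaPow n r a)) (D a) \<in> L"
      unfolding DiaLe_def[of n m "DiaPow n r a"]
    proof (rule disjs_imp)
      show "nfm n (D a)" using less D_nfm by auto
      show "\<forall>x\<in>set (map (\<lambda>i. DiaPow n i (DiaPow n r a)) [0..<Suc m]). Imp x (D a) \<in> L"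
      proof
        fix x assume "x \<in> set (map (\<lambda>i. DiaPow n i (DiaPow n r a)) [0..<Suc m])"
        then obtain i where i: "i < Suc m" "x = DiaPow n (i + r) a"
          by (auto simp: DiaPow_comp simp del: DiaPow.simps upt_Suc)
        have "i + r < k" using i k by simp
        thus "Imp x (D a) \<in> L" using less i by auto
      qed
    qed
    show ?thesis using imp_trans[OF 1 2] .
  qed
qed

lemma D_trans: "nfm n a \<Longrightarrow> Imp (D (D a)) (D a) \<in> L"
proof -
  assume a: "nfm n a"
  have "Imp (DiaPow n i (D a)) (D a) \<in> L" for i
  proof -
    have 1: "Imp (DiaPow n i (D a)) (Disjs (map (DiaPow n i) (map (\<lambda>j. DiaPow n j a) [0..<Suc m]))) \<in> L"
      unfolding DiaLe_def
      by (rule nop_Disjs_dist[OF nop_DiaPow]) (use a DiaPow_nfm in \<open>auto simp del: upt_Suc\<close>)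
    have 2: "Imp (Disjs (map (DiaPow n i) (map (\<lambda>j. DiaPow n j a) [0..<Suc m]))) (D a) \<in> L"
    proof (rule disjs_imp)
      show "nfm n (D a)" using a D_nfm by auto
      show "\<forall>x\<in>set (map (DiaPow n i) (map (\<lambda>j. DiaPow n j a) [0..<Suc m])). Imp x (D a) \<in> L"
        using pow_D[OF a] by (auto simp: DiaPow_comp simp del: DiaPow.simps upt_Suc)
    qed
    show ?thesis using imp_trans[OF 1 2] .
  qed
  thus ?thesis unfolding DiaLe_def[of n m "D a"]
    by (intro disjs_imp) (use a D_nfm in \<open>auto simp del: upt_Suc DiaPow.simps\<close>)
qed

lemma box_L: "a \<in> L \<Longrightarrow> bx a \<in> L"
proof -
  assume a: "a \<in> L"
  have "Imp (Neg a) Bot \<in> L" by (rule taut_mp[of "[a]"]) (use a L_nfm in auto)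
  hence "Imp (D (Neg a)) (D Bot) \<in> L" by (rule D_mono)
  thus ?thesis using D_bot by (intro taut_mp[of "[Imp (D (Neg a)) (D Bot), Neg (D Bot)]"]) (auto dest: L_nfm)
qed

lemma box_K:
  assumes a: "nfm n a" and b: "nfm n b"
  shows "Imp (bx (Imp a b)) (Imp (bx a) (bx b)) \<in> L"
proof -
  have "Imp (Neg b) (Or (Neg (Imp a b)) (Neg a)) \<in> L" by (rule taut_in) (use a b in auto)
  hence 1: "Imp (D (Neg b)) (D (Or (Neg (Imp a b)) (Neg a))) \<in> L" by (rule D_mono)
  have 2: "Imp (D (Or (Neg (Imp a b)) (Neg a))) (Or (D (Neg (Imp a b))) (D (Neg a))) \<in> L"
    using D_dist a b by simp
  show ?thesis by (rule taut_mp[of "[Imp (D (Neg b)) (D (Or (Neg (Imp a b)) (Neg a))),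
      Imp (D (Or (Neg (Imp a b)) (Neg a))) (Or (D (Neg (Imp a b))) (D (Neg a)))]"])
    (use 1 2 in \<open>auto dest: L_nfm\<close>)
qed

lemma box_mcs:
  assumes z: "mcs z"
  shows "\<forall>b\<in>set Bs. nfm n b \<and> bx b \<in> z \<Longrightarrow> nfm n c \<Longrightarrow> imps Bs c \<in> L \<Longrightarrow> bx c \<in> z"
proof (induct Bs arbitrary: c)
  case Nil then show ?case using box_L mcs_L[OF z] by auto
next
  case (Cons b Bs)
  have b: "nfm n b" "bx b \<in> z" using Cons by auto
  have "imps Bs (Imp b c) \<in> L"
    by (rule taut_mp[of "[imps (b # Bs) c]"]) (use Cons in \<open>auto dest: L_nfm\<close>)
  hence "bx (Imp b c) \<in> z" using Cons b by auto
  moreover have "Imp (bx (Imp b c)) (Imp (bx b) (bx c)) \<in> z"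
    using box_K[OF b(1) Cons(3)] mcs_L[OF z] by auto
  ultimately show ?case using b mcs_Imp[OF z] D_nfm b Cons(3) by simp
qed

definition rel :: "fm set \<Rightarrow> fm set \<Rightarrow> bool" where
  "rel z w \<longleftrightarrow> (\<forall>a\<in>w. D a \<in> z)"

lemma existence:
  assumes z: "mcs z" and p: "nfm n p" and dp: "D p \<in> z"
  shows "\<exists>w. mcs w \<and> p \<in> w \<and> rel z w"
proof -
  define S where "S = insert p {a. nfm n a \<and> bx a \<in> z}"
  have nnp: "Imp (D p) (D (Neg (Neg p))) \<in> L"
    by (rule D_mono, rule taut_in) (use p in auto)
  have "cons S"
    unfolding cons_def
  proof
    assume "\<exists>As. set As \<subseteq> S \<and> imps As Bot \<in> L"
    then obtain As where As: "set As \<subseteq> S" "imps As Bot \<in> L" by blast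
    have "imps (filter (\<lambda>x. x \<noteq> p) As) (Neg p) \<in> L"
      by (rule taut_mp[of "[imps As Bot]"]) (use As p in \<open>auto dest!: L_nfm\<close>)
    hence "bx (Neg p) \<in> z"
      using box_mcs[OF z, of "filter (\<lambda>x. x \<noteq> p) As" "Neg p"] As p by (auto simp: S_def)
    moreover have "D (Neg (Neg p)) \<in> z" using mcs_MP[OF z nnp dp] .
    ultimately show False using mcs_Neg[OF z] D_nfm p by auto
  qed
  moreover have "\<forall>a\<in>S. nfm n a" using p by (auto simp: S_def)
  ultimately obtain w where w: "S \<subseteq> w" "mcs w" using lindenbaum by blast
  have "D a \<in> z" if a: "a \<in> w" for a
  proof (rule ccontr)
    assume "D a \<notin> z"
    have an: "nfm n a" using w a by (auto simp: mcs_def)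
    have "Imp (D (Neg (Neg a))) (D a) \<in> L"
      by (rule D_mono, rule taut_in) (use an in auto)
    hence "D (Neg (Neg a)) \<notin> z" using mcs_MP[OF z] \<open>D a \<notin> z\<close> by blast
    hence "bx (Neg a) \<in> z" using mcs_Neg[OF z] D_nfm an by auto
    hence "Neg a \<in> w" using w an by (auto simp: S_def)
    thus False using a mcs_Neg[OF w(2) an] by auto
  qed
  thus ?thesis using w by (auto simp: S_def rel_def)
qed

lemma rel_D: "mcs z \<Longrightarrow> rel z w \<Longrightarrow> nfm n a \<Longrightarrow> D a \<in> w \<Longrightarrow> D a \<in> z"
  using D_trans mcs_MP unfolding rel_def by blast

end


fun cntf :: "(nat \<Rightarrow> fm) \<Rightarrow> fm set \<Rightarrow> nat \<Rightarrow> nat" where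
  "cntf q z 0 = 0"
| "cntf q z (Suc k) = cntf q z k + (if q (Suc k) \<in> z then 1 else 0)"

fun Xf :: "(nat \<Rightarrow> fm) \<Rightarrow> nat \<Rightarrow> fm" where
  "Xf q 0 = Bot"
| "Xf q (Suc k) = Iff (q (Suc k)) (Neg (Xf q k))"

fun Af :: "(fm \<Rightarrow> fm) \<Rightarrow> fm \<Rightarrow> bool \<Rightarrow> nat \<Rightarrow> fm" where
  "Af d c b 0 = Neg Bot"
| "Af d c b (Suc k) = And (if b then c else Neg c) (d (Af d c (\<not> b) k))"

definition alpha :: "(fm \<Rightarrow> fm) \<Rightarrow> fm \<Rightarrow> nat \<Rightarrow> fm" where
  "alpha d c k = Or (Af d c True k) (Af d c False k)"

lemma cntf_le: "cntf q z k \<le> k"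
  by (induct k) auto

lemma cntf_exact: "(\<forall>i. 1 \<le> i \<and> i \<le> h \<longrightarrow> (q i \<in> z \<longleftrightarrow> i \<le> k)) \<Longrightarrow> cntf q z h = min k h"
  by (induct h) auto

lemma cntf_mono: "(\<forall>i. q i \<in> w \<longrightarrow> q i \<in> z) \<Longrightarrow> cntf q w k \<le> cntf q z k"
  by (induct k) auto

lemma subst_Af: "subst s (Af (DiaLe n m) c b k) = Af (DiaLe n m) (subst s c) b k"
  by (induct k arbitrary: b) auto

lemma vars_Af: "vars (Af (DiaLe n m) c b k) \<subseteq> vars c"
  by (induct k arbitrary: b) (auto dest: vars_DiaLe[THEN subsetD])

context MLg
begin

lemma Bh_nfm: "nfm n (Bh n L k)"
  using nop_DiaLe by (induct k) (auto simp: BoxStar_def DiaStar_def BoxLe_def nop_def)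

end

context PT
begin

abbreviation Q :: "nat \<Rightarrow> fm" where "Q i \<equiv> D (Var i)"
abbreviation chi :: "nat \<Rightarrow> fm" where "chi h \<equiv> Xf Q h"

lemma Q_nfm: "nfm n (Q i)" using D_nfm by simp

lemma chi_nfm: "nfm n (chi h)"
  using Q_nfm by (induct h) auto

lemma Af_nfm: "nfm n c \<Longrightarrow> nfm n (Af D c b k)"
  using D_nfm by (induct k arbitrary: b) auto

lemma chi_mcs: "mcs z \<Longrightarrow> chi h \<in> z \<longleftrightarrow> odd (cntf Q z h)"
proof (induct h)
  case 0 then show ?case using mcs_Bot by auto
next
  case (Suc h)
  have nc: "nfm n (Neg (chi h))" using chi_nfm by simp
  show ?case using mcs_Iff[OF Suc(2) Q_nfm nc]
      mcs_Neg[OF Suc(2) chi_nfm, of h] Suc by auto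
qed

lemma rel_cnt: "mcs z \<Longrightarrow> rel z w \<Longrightarrow> cntf Q w h \<le> cntf Q z h"
  by (rule cntf_mono) (auto intro: rel_D)

lemma upper:
  "mcs z \<Longrightarrow> Af D (chi h) b (Suc k) \<in> z \<Longrightarrow> k \<le> cntf Q z h"
proof (induct k arbitrary: z b)
  case 0 then show ?case by simp
next
  case (Suc k)
  have z: "mcs z" by fact
  have cn: "nfm n (chi h)" "nfm n (Neg (chi h))" using chi_nfm by auto
  have an: "nfm n (Af D (chi h) (\<not> b) (Suc k))" using Af_nfm cn by blast
  have "(if b then chi h else Neg (chi h)) \<in> z" "D (Af D (chi h) (\<not> b) (Suc k)) \<in> z"
    using Suc(3) mcs_And[OF z] an D_nfm cn by (auto split: if_splits)
  hence bz: "chi h \<in> z \<longleftrightarrow> b" and dz: "D (Af D (chi h) (\<not> b) (Suc k)) \<in> z"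
    using mcs_Neg[OF z cn(1)] by (auto split: if_splits)
  obtain w where w: "mcs w" "Af D (chi h) (\<not> b) (Suc k) \<in> w" "rel z w"
    using existence[OF z an dz] by blast
  have "(if \<not> b then chi h else Neg (chi h)) \<in> w"
    using w(2) mcs_And[OF w(1)] an D_nfm cn Af_nfm by (auto split: if_splits)
  hence bw: "chi h \<in> w \<longleftrightarrow> \<not> b" using mcs_Neg[OF w(1) cn(1)] by (auto split: if_splits)
  have "k \<le> cntf Q w h" using Suc(1)[OF w(1) w(2)] .
  moreover have "cntf Q w h \<le> cntf Q z h" using rel_cnt z w(3) by blast
  moreover have "cntf Q w h \<noteq> cntf Q z h" using bz bw chi_mcs[OF z] chi_mcs[OF w(1)] by auto
  ultimately show ?case by simp
qed

lemma chain:
  assumes tm: "trans_index n L = m"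
  shows "mcs z \<Longrightarrow> Neg (Bh n L k) \<in> z \<Longrightarrow> k \<le> h \<Longrightarrow> (\<forall>i. k < i \<and> i \<le> h \<longrightarrow> Q i \<notin> z) \<Longrightarrow>
    (\<forall>i. 1 \<le> i \<and> i \<le> k \<longrightarrow> Q i \<in> z) \<and> (chi h \<in> z \<longrightarrow> Af D (chi h) True (Suc k) \<in> z) \<and>
    (chi h \<notin> z \<longrightarrow> Af D (chi h) False (Suc k) \<in> z)"
proof (induct k arbitrary: z)
  case 0
  have z: "mcs z" by fact
  have "Neg Bot \<in> L" by (rule taut_in) auto
  hence "D (Neg Bot) \<in> z" using D_refl[of "Neg Bot"] mcs_MP[OF z] mcs_L[OF z] by auto
  then show ?case using mcs_And[OF z] chi_nfm mcs_Neg[OF z] D_nfm by auto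
next
  case (Suc k)
  have z: "mcs z" by fact
  have bhs: "Bh n L (Suc k) = Imp (Var (Suc k)) (bx (Or (Q (Suc k)) (Bh n L k)))"
    using tm by (simp add: BoxStar_def DiaStar_def BoxLe_def)
  have bn: "nfm n (Bh n L k)" by (rule Bh_nfm)
  have on: "nfm n (Or (Q (Suc k)) (Bh n L k))" using bn Q_nfm by auto
  have "Bh n L (Suc k) \<notin> z" using Suc(3) mcs_Neg[OF z Bh_nfm, of "Suc k"] by blast
  hence pz: "Var (Suc k) \<in> z" and "bx (Or (Q (Suc k)) (Bh n L k)) \<notin> z"
    unfolding bhs using mcs_Imp[OF z] on D_nfm by auto
  hence dz: "D (Neg (Or (Q (Suc k)) (Bh n L k))) \<in> z" using mcs_Neg[OF z] D_nfm on by auto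
  obtain w where w: "mcs w" "Neg (Or (Q (Suc k)) (Bh n L k)) \<in> w" "rel z w"
    using existence[OF z _ dz] on by auto
  have qw: "Q (Suc k) \<notin> w" and bw: "Neg (Bh n L k) \<in> w"
    using w(2) mcs_Neg[OF w(1)] mcs_Or[OF w(1)] on bn Q_nfm by auto
  have hw: "\<forall>i. k < i \<and> i \<le> h \<longrightarrow> Q i \<notin> w"
  proof (intro allI impI)
    fix i assume i: "k < i \<and> i \<le> h"
    show "Q i \<notin> w"
    proof (cases "i = Suc k")
      case True then show ?thesis using qw by simp
    next
      case False
      hence "Q i \<notin> z" using Suc(5) i by auto
      thus ?thesis using rel_D[OF z w(3)] by auto
    qed
  qed
  have IH: "(\<forall>i. 1 \<le> i \<and> i \<le> k \<longrightarrow> Q i \<in> w) \<and> (chi h \<in> w \<longrightarrow> Af D (chi h) True (Suc k) \<in> w) \<and>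
    (chi h \<notin> w \<longrightarrow> Af D (chi h) False (Suc k) \<in> w)"
    using Suc(1)[OF w(1) bw _ hw] Suc(4) by auto
  have qsz: "Q (Suc k) \<in> z" using D_refl[of "Var (Suc k)"] mcs_MP[OF z] pz by auto
  have qz: "\<forall>i. 1 \<le> i \<and> i \<le> Suc k \<longrightarrow> Q i \<in> z"
  proof (intro allI impI)
    fix i assume i: "1 \<le> i \<and> i \<le> Suc k"
    show "Q i \<in> z"
    proof (cases "i = Suc k")
      case True then show ?thesis using qsz by simp
    next
      case False then show ?thesis using IH i rel_D[OF z w(3)] by auto
    qed
  qed
  have "\<forall>i. 1 \<le> i \<and> i \<le> h \<longrightarrow> (Q i \<in> z \<longleftrightarrow> i \<le> Suc k)"
    using qz Suc(5) by (meson not_le)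
  hence "cntf Q z h = Suc k"
    using cntf_exact[of h Q z "Suc k"] Suc(4) by auto
  moreover have "\<forall>i. 1 \<le> i \<and> i \<le> h \<longrightarrow> (Q i \<in> w \<longleftrightarrow> i \<le> k)"
    using IH hw by (meson not_le)
  hence "cntf Q w h = k"
    using cntf_exact[of h Q w k] Suc(4) by auto
  ultimately have par: "chi h \<in> z \<longleftrightarrow> chi h \<notin> w" using chi_mcs[OF z] chi_mcs[OF w(1)] by auto
  have an: "\<And>b. nfm n (Af D (chi h) b (Suc k))" using Af_nfm chi_nfm by blast
  show ?case
  proof (intro conjI impI)
    show "\<forall>i. 1 \<le> i \<and> i \<le> Suc k \<longrightarrow> Q i \<in> z" by fact
  next
    assume c: "chi h \<in> z"
    hence "Af D (chi h) False (Suc k) \<in> w" using par IH by auto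
    hence "D (Af D (chi h) False (Suc k)) \<in> z" using w(3) by (auto simp: rel_def)
    thus "Af D (chi h) True (Suc (Suc k)) \<in> z"
      using c mcs_And[OF z] chi_nfm D_nfm an by (simp del: Af.simps(2) add: Af.simps(2)[of _ _ True])
  next
    assume c: "chi h \<notin> z"
    hence "Af D (chi h) True (Suc k) \<in> w" using par IH by auto
    hence "D (Af D (chi h) True (Suc k)) \<in> z" using w(3) by (auto simp: rel_def)
    thus "Af D (chi h) False (Suc (Suc k)) \<in> z"
      using c mcs_And[OF z] mcs_Neg[OF z] chi_nfm D_nfm an by (simp del: Af.simps(2) add: Af.simps(2)[of _ _ False])
  qed
qed

end


theorem mainTheorem1:
  fixes n :: nat and L :: "fm set"
  assumes "n \<ge> 1"
    and "logic n L"
    and "tabular n L 1"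
  shows "pretransitive n L \<and> finite_height n L"
proof -
  interpret MLg n L using assms(2) by unfold_locales
  have pt: "pretransitive n L" using pretrans assms(3) .
  define m where "m = trans_index n L"
  have mt: "m_transitive n L m"
    using pt unfolding m_def trans_index_def pretransitive_def by (metis LeastI_ex)
  interpret PT n L m using mt by unfold_locales
  have "\<exists>h. Bh n L h \<in> L"
  proof (rule ccontr)
    assume nb: "\<not> (\<exists>h. Bh n L h \<in> L)"
    have k: "kfm n 1 (alpha (DiaLe n m) (Var 0) (Suc i))" for i
      using Af_nfm[of "Var 0"] vars_Af[of n m "Var 0"] by (auto simp: kfm_def alpha_def simp del: Af.simps; blast)
    obtain i j where ij: "i < j"
      "Iff (alpha (DiaLe n m) (Var 0) (Suc i)) (alpha (DiaLe n m) (Var 0) (Suc j)) \<in> L"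
      using tab_noninj[OF assms(3) k, of UNIV] by blast
    have "cons {Neg (Bh n L i)}"
      unfolding cons_def
    proof
      assume "\<exists>As. set As \<subseteq> {Neg (Bh n L i)} \<and> imps As Bot \<in> L"
      then obtain As where As: "set As \<subseteq> {Neg (Bh n L i)}" "imps As Bot \<in> L" by blast
      have "Bh n L i \<in> L"
      proof (rule taut_mp[of "[imps As Bot]"])
        fix v assume "\<forall>a\<in>set [imps As Bot]. peval v a"
        thus "peval v (Bh n L i)" using As(1) by auto
      qed (use As Bh_nfm in auto)
      thus False using nb by blast
    qed
    moreover have "\<forall>a\<in>{Neg (Bh n L i)}. nfm n a" using Bh_nfm by simp
    ultimately obtain G where G: "{Neg (Bh n L i)} \<subseteq> G" "mcs G" using lindenbaum by blast
    define c where "c = Xf (\<lambda>i. DiaLe n m (Var i)) i"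
    have cn: "nfm n c" unfolding c_def by (rule chi_nfm)
    have ch: "(c \<in> G \<longrightarrow> Af (DiaLe n m) c True (Suc i) \<in> G) \<and>
      (c \<notin> G \<longrightarrow> Af (DiaLe n m) c False (Suc i) \<in> G)"
      using chain[OF m_def[symmetric] G(2), of i i] G(1) unfolding c_def by force
    have an: "\<And>b k. nfm n (Af (DiaLe n m) c b k)" using Af_nfm cn by blast
    have "alpha (DiaLe n m) c (Suc i) \<in> G"
      using ch mcs_Or[OF G(2) an an] unfolding alpha_def by blast
    moreover have "Iff (alpha (DiaLe n m) c (Suc i)) (alpha (DiaLe n m) c (Suc j)) \<in> L"
      using sub[of "\<lambda>_. c", OF _ ij(2)] cn by (simp add: alpha_def subst_Af del: Af.simps)
    ultimately have "alpha (DiaLe n m) c (Suc j) \<in> G"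
      using mcs_L[OF G(2)] mcs_Iff[OF G(2)] an unfolding alpha_def by (metis nfm_conn(2))
    then obtain b where "Af (DiaLe n m) c b (Suc j) \<in> G"
      using mcs_Or[OF G(2) an an] unfolding alpha_def by blast
    hence "j \<le> cntf (\<lambda>i. DiaLe n m (Var i)) G i"
      using upper[OF G(2)] unfolding c_def by blast
    moreover have "cntf (\<lambda>i. DiaLe n m (Var i)) G i \<le> i" by (rule cntf_le)
    ultimately show False using ij(1) by simp
  qed
  thus ?thesis using pt by (simp add: finite_height_def)
qed

end
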